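(* Let $n,m,k,t\ge 1$ and $r\ge 0$ be integers with $n\ge k$ and $m\ge \lceil k/t\rceil + r$. Then the minimum total storage $\sum_{i=1}^m|S_i|$ of an erasure combinatorial batch code for consecutive files with parameters $n,m,k,t,r$ equals $(r+1)n$.
   Context: Files are indexed by $X=\{1,\dots,n\}$ in their linear order, and $m$ servers store subsets $S_1,\dots,S_m\subseteq X$. The family $(S_1,\dots,S_m)$ is an erasure combinatorial batch code for consecutive files with parameters $n,m,k,t,r$ if for every set $X'=\{a,a+1,\dots,a+c-1\}\subseteq X$ of $c\le k$ consecutive indices and every subset $J\subseteq\{1,\dots,m\}$ with $|J|\ge m-r$, there exist subsets $C_j\subseteq S_j$ ($j\in J$) with $|C_j|\le t$ and $X'=\bigcup_{j\in J}C_j$. The total storage is $\sum_{i=1}^m |S_i|$. *)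

theory Defs
  imports Complex_Main
begin

definition ecbc_consecutive :: "nat \<Rightarrow> nat \<Rightarrow> nat \<Rightarrow> nat \<Rightarrow> nat \<Rightarrow> (nat \<Rightarrow> nat set) \<Rightarrow> bool" where
  "ecbc_consecutive n m k t r S \<longleftrightarrow>
     (\<forall>i\<in>{1..m}. S i \<subseteq> {1..n}) \<and>
     (\<forall>a c J. 1 \<le> c \<and> c \<le> k \<and> {a..<a+c} \<subseteq> {1..n} \<and>
        J \<subseteq> {1..m} \<and> card J + r \<ge> m \<longrightarrow>
        (\<exists>C. (\<forall>j\<in>J. C j \<subseteq> S j \<and> card (C j) \<le> t) \<and> {a..<a+c} = (\<Union>j\<in>J. C j)))"

definition total_storage :: "nat \<Rightarrow> (nat \<Rightarrow> nat set) \<Rightarrow> nat" where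
  "total_storage m S = (\<Sum>i=1..m. card (S i))"

end

theory Submission
  imports Defs
begin

lemma dvd_small: "(N::nat) dvd d \<Longrightarrow> d < N \<Longrightarrow> d = 0"
proof -
  assume "N dvd d" "d < N"
  then obtain q where q: "d = N * q" by (auto elim: dvdE)
  show "d = 0"
  proof (cases "q = 0")
    case False
    then have "N * q \<ge> N" by simp
    then show ?thesis using q \<open>d < N\<close> by linarith
  qed (use q in simp)
qed

lemma modinj: "inj_on (\<lambda>x::nat. x mod N) {b..<b+N}"
proof (rule inj_onI)
  fix x y assume x: "x \<in> {b..<b+N}" and y: "y \<in> {b..<b+N}" and e: "x mod N = y mod N"
  show "x = y"
  proof (cases "x \<le> y")
    case True
    then have "N dvd y - x" using mod_eq_dvd_iff_nat[OF True, of N] e by simp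
    moreover have "y - x < N" using x y by auto
    ultimately have "y - x = 0" by (rule dvd_small)
    then show ?thesis using True by simp
  next
    case False
    then have "y \<le> x" by simp
    then have "N dvd x - y" using mod_eq_dvd_iff_nat[OF \<open>y \<le> x\<close>, of N] e by simp
    moreover have "x - y < N" using x y by auto
    ultimately have "x - y = 0" by (rule dvd_small)
    then show ?thesis using False by simp
  qed
qed

lemma window_card:
  fixes a c N t v :: nat
  assumes "c \<le> N" "a \<ge> 1" "t \<ge> 1"
  shows "card {x\<in>{a..<a+c}. ((x-1) mod N) div t = v} \<le> t"
proof -
  let ?A = "{x\<in>{a..<a+c}. ((x-1) mod N) div t = v}"
  have "inj_on (\<lambda>x. x - 1) ?A" by (rule inj_onI) (use assms in auto)
  moreover have "inj_on (\<lambda>x::nat. x mod N) ((\<lambda>x. x - 1) ` ?A)"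
    by (rule inj_on_subset[OF modinj[of N "a-1"]]) (use assms in auto)
  ultimately have "inj_on ((\<lambda>x::nat. x mod N) \<circ> (\<lambda>x. x - 1)) ?A"
    using comp_inj_on by blast
  then have inj2: "inj_on (\<lambda>x::nat. (x - 1) mod N) ?A" by (simp add: o_def)
  have "card ?A = card (((\<lambda>x::nat. x mod N) \<circ> (\<lambda>x. x - 1)) ` ?A)"
    using card_image[OF inj2] by (simp add: o_def)
  also have "\<dots> \<le> card {v*t..<v*t+t}"
  proof (rule card_mono)
    show "((\<lambda>x::nat. x mod N) \<circ> (\<lambda>x. x - 1)) ` ?A \<subseteq> {v*t..<v*t+t}"
    proof
      fix y assume "y \<in> ((\<lambda>x::nat. x mod N) \<circ> (\<lambda>x. x - 1)) ` ?A"
      then obtain x where "y = (x - 1) mod N" "((x-1) mod N) div t = v" by auto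
      then have "y div t = v" by simp
      moreover have "y = (y div t) * t + y mod t" by simp
      moreover have "y mod t < t" using assms(3) by simp
      ultimately show "y \<in> {v*t..<v*t+t}" by (metis atLeastLessThan_iff add_less_cancel_left le_add1)
    qed
  qed simp
  finally show ?thesis by simp
qed

lemma ceil_bound: "t \<ge> 1 \<Longrightarrow> (k::nat) \<le> t * nat \<lceil>real k / real t\<rceil>"
  by (smt (verit) ceiling_divide_upper divide_nonneg_nonneg mult.commute
    of_nat_0_le_iff of_nat_int_ceiling of_nat_le_iff of_nat_mult
    one_of_nat_le_iff)

lemma double_count:
  assumes "\<forall>i\<in>{1..m}. S i \<subseteq> {1..n::nat}"
  shows "(\<Sum>i=1..m. card (S i)) = (\<Sum>x=1..n. card {i\<in>{1..m::nat}. x \<in> S i})"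
proof -
  have "(\<Sum>i=1..m. card (S i)) = (\<Sum>i=1..m. \<Sum>x=1..n. if x \<in> S i then 1 else 0)"
  proof (rule sum.cong)
    fix i assume "i \<in> {1..m}"
    then have "S i \<subseteq> {1..n}" using assms by blast
    then have "S i = {x\<in>{1..n}. x \<in> S i}" by blast
    then have "card (S i) = (\<Sum>x\<in>{x\<in>{1..n}. x \<in> S i}. 1)" by simp
    also have "\<dots> = (\<Sum>x=1..n. if x \<in> S i then 1 else 0)"
      by (rule sum.inter_filter) simp
    finally show "card (S i) = (\<Sum>x=1..n. if x \<in> S i then 1 else 0)" .
  qed simp
  also have "\<dots> = (\<Sum>x=1..n. \<Sum>i=1..m. if x \<in> S i then 1 else 0)"
    by (rule sum.swap)
  also have "\<dots> = (\<Sum>x=1..n. card {i\<in>{1..m::nat}. x \<in> S i})"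
  proof (rule sum.cong)
    fix x
    have "card {i\<in>{1..m::nat}. x \<in> S i} = (\<Sum>i\<in>{i\<in>{1..m::nat}. x \<in> S i}. 1)" by simp
    also have "\<dots> = (\<Sum>i=1..m. if x \<in> S i then 1 else 0)"
      by (rule sum.inter_filter) simp
    finally show "(\<Sum>i=1..m. if x \<in> S i then 1 else 0) = card {i\<in>{1..m::nat}. x \<in> S i}" by simp
  qed simp
  finally show ?thesis .
qed

lemma lower:
  assumes "ecbc_consecutive n m k t r S" "k \<ge> 1"
  shows "total_storage m S \<ge> (r + 1) * n"
proof -
  have sub: "\<forall>i\<in>{1..m}. S i \<subseteq> {1..n}" and P: "\<forall>a c J. 1 \<le> c \<and> c \<le> k \<and> {a..<a+c} \<subseteq> {1..n} \<and>
        J \<subseteq> {1..m} \<and> card J + r \<ge> m \<longrightarrow>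
        (\<exists>C. (\<forall>j\<in>J. C j \<subseteq> S j \<and> card (C j) \<le> t) \<and> {a..<a+c} = (\<Union>j\<in>J. C j))"
    using assms(1) unfolding ecbc_consecutive_def by blast+
  have each: "card {i\<in>{1..m}. x \<in> S i} \<ge> r + 1" if x: "x \<in> {1..n}" for x
  proof (rule ccontr)
    let ?I = "{i\<in>{1..m}. x \<in> S i}"
    assume "\<not> ?thesis"
    then have cI: "card ?I \<le> r" by simp
    let ?J = "{1..m} - ?I"
    have "card ?J = m - card ?I" by (subst card_Diff_subset) auto
    then have "card ?J + r \<ge> m" using cI by simp
    moreover have "{x..<x+1} \<subseteq> {1..n}" using x by auto
    ultimately obtain C where C: "\<forall>j\<in>?J. C j \<subseteq> S j" "{x..<x+1} = (\<Union>j\<in>?J. C j)"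
      using P[rule_format, of 1 x ?J] assms(2) by auto
    have "x \<in> (\<Union>j\<in>?J. C j)" using C(2) by (metis atLeastLessThan_iff lessI le_refl add.commute plus_1_eq_Suc)
    then obtain j where "j \<in> ?J" "x \<in> C j" by blast
    then show False using C(1) by auto
  qed
  have "(r+1) * n = (\<Sum>x=1..n. r + 1)" by simp
  also have "\<dots> \<le> (\<Sum>x=1..n. card {i\<in>{1..m}. x \<in> S i})"
    by (rule sum_mono) (use each in auto)
  also have "\<dots> = total_storage m S"
    unfolding total_storage_def using double_count[OF sub] by simp
  finally show ?thesis .
qed


lemma rank_bij:
  fixes J :: "nat set"
  assumes "finite J"
  shows "(\<lambda>j. card {i\<in>J. i<j}) ` J = {0..<card J}"
proof -
  let ?rk = "\<lambda>j. card {i\<in>J. i<j}"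
  have mono: "?rk i < ?rk j" if "i \<in> J" "j \<in> J" "i < j" for i j
  proof (rule psubset_card_mono)
    show "finite {i\<in>J. i<j}" using assms by simp
    show "{i'\<in>J. i'<i} \<subset> {i\<in>J. i<j}" using that by auto
  qed
  have inj: "inj_on ?rk J"
  proof (rule inj_onI)
    fix x y assume "x \<in> J" "y \<in> J" "?rk x = ?rk y"
    then show "x = y" using mono[of x y] mono[of y x] by (metis less_irrefl nat_neq_iff)
  qed
  have sub: "?rk ` J \<subseteq> {0..<card J}"
  proof
    fix y assume "y \<in> ?rk ` J"
    then obtain j where j: "j \<in> J" "y = ?rk j" by auto
    have "{i\<in>J. i<j} \<subset> J" using j by auto
    then have "?rk j < card J" using assms psubset_card_mono by blast
    then show "y \<in> {0..<card J}" using j by simp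
  qed
  have "card (?rk ` J) = card {0..<card J}" using card_image[OF inj] by simp
  then show ?thesis using card_subset_eq[OF _ sub] by simp
qed

lemma upper:
  fixes n m k t r :: nat
  assumes "t \<ge> 1" "m \<ge> r + 1" "k \<le> (m - r) * t"
  defines "cls \<equiv> \<lambda>x::nat. ((x-1) mod ((m - r) * t)) div t"
  defines "S \<equiv> \<lambda>i. {x\<in>{1..n}. cls x + 1 \<le> i \<and> i \<le> cls x + 1 + r}"
  shows "ecbc_consecutive n m k t r S \<and> total_storage m S = (r + 1) * n"
proof -
  define Q where "Q = m - r"
  have Q1: "Q \<ge> 1" using assms(2) Q_def by simp
  have clsQ: "cls x < Q" for x
  proof -
    have "(x-1) mod (Q * t) < Q * t" using Q1 assms(1) by simp
    then show ?thesis unfolding cls_def Q_def[symmetric]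
      by (rule less_mult_imp_div_less)
  qed
  have cnt: "card {i\<in>{1..m}. x \<in> S i} = r + 1" if "x \<in> {1..n}" for x
  proof -
    have "{i\<in>{1..m}. x \<in> S i} = {cls x + 1..cls x + 1 + r}"
      using that clsQ[of x] Q_def unfolding S_def by auto
    then show ?thesis by simp
  qed
  have subS: "\<forall>i\<in>{1..m}. S i \<subseteq> {1..n}" unfolding S_def by auto
  have ts: "total_storage m S = (r + 1) * n"
    unfolding total_storage_def double_count[OF subS] using cnt by simp
  have main: "\<exists>C. (\<forall>j\<in>J. C j \<subseteq> S j \<and> card (C j) \<le> t) \<and> {a..<a+c} = (\<Union>j\<in>J. C j)"
    if c: "1 \<le> c" "c \<le> k" "{a..<a+c} \<subseteq> {1..n}" "J \<subseteq> {1..m}" "card J + r \<ge> m" for a c J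
  proof -
    let ?rk = "\<lambda>j. card {i\<in>J. i<j}"
    define C where "C = (\<lambda>j. {x\<in>{a..<a+c}. cls x = ?rk j})"
    have finJ: "finite J" using c(4) finite_subset by blast
    have "a \<in> {a..<a+c}" using c(1) by simp
    then have a1: "a \<ge> 1" using c(3) by (meson subsetD atLeastAtMost_iff)
    have "\<forall>j\<in>J. C j \<subseteq> S j \<and> card (C j) \<le> t"
    proof
      fix j assume j: "j \<in> J"
      have r1: "?rk j + 1 \<le> j"
      proof -
        have "{i\<in>J. i<j} \<subseteq> {1..<j}" using c(4) by auto
        then have "?rk j \<le> card {1..<j}" by (intro card_mono) auto
        moreover have "j \<ge> 1" using j c(4) by (meson subsetD atLeastAtMost_iff)
        ultimately show ?thesis by simp
      qed
      have r2: "j \<le> ?rk j + 1 + r"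
      proof -
        have "{1..<j} \<subseteq> {i\<in>J. i<j} \<union> ({1..m} - J)" using j c(4) by auto
        then have "card {1..<j} \<le> card ({i\<in>J. i<j} \<union> ({1..m} - J))" by (intro card_mono) auto
        also have "\<dots> \<le> ?rk j + card ({1..m} - J)" by (rule card_Un_le)
        also have "card ({1..m} - J) = m - card J" using c(4) finJ by (simp add: card_Diff_subset)
        finally show ?thesis using c(5) by simp
      qed
      have "C j \<subseteq> S j" unfolding C_def S_def using c(3) r1 r2 by auto
      moreover have "card (C j) \<le> t"
      proof -
        have "card (C j) = card {x\<in>{a..<a+c}. ((x-1) mod ((m - r) * t)) div t = ?rk j}"
          unfolding C_def cls_def by simp
        also have "\<dots> \<le> t" using window_card[of c "(m - r) * t" a t] c(2) assms(1,3) a1 by simp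
        finally show ?thesis .
      qed
      ultimately show "C j \<subseteq> S j \<and> card (C j) \<le> t" by simp
    qed
    moreover have "{a..<a+c} = (\<Union>j\<in>J. C j)"
    proof
      show "(\<Union>j\<in>J. C j) \<subseteq> {a..<a+c}" unfolding C_def by auto
      show "{a..<a+c} \<subseteq> (\<Union>j\<in>J. C j)"
      proof
        fix x assume x: "x \<in> {a..<a+c}"
        have "cls x < card J" using clsQ[of x] Q_def c(5) by simp
        then have "cls x \<in> ?rk ` J" using rank_bij[OF finJ] by simp
        then obtain j where "j \<in> J" "cls x = ?rk j" by auto
        then show "x \<in> (\<Union>j\<in>J. C j)" using x unfolding C_def by auto
      qed
    qed
    ultimately show ?thesis by blast
  qed
  have P: "\<forall>a c J. 1 \<le> c \<and> c \<le> k \<and> {a..<a+c} \<subseteq> {1..n} \<and>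
        J \<subseteq> {1..m} \<and> card J + r \<ge> m \<longrightarrow>
        (\<exists>C. (\<forall>j\<in>J. C j \<subseteq> S j \<and> card (C j) \<le> t) \<and> {a..<a+c} = (\<Union>j\<in>J. C j))"
  proof (intro allI impI)
    fix a c J
    assume h: "1 \<le> c \<and> c \<le> k \<and> {a..<a+c} \<subseteq> {1..n} \<and>
        J \<subseteq> {1..m} \<and> card J + r \<ge> m"
    show "\<exists>C. (\<forall>j\<in>J. C j \<subseteq> S j \<and> card (C j) \<le> t) \<and> {a..<a+c} = (\<Union>j\<in>J. C j)"
      by (rule main) (use h in simp_all)
  qed
  have "ecbc_consecutive n m k t r S"
    unfolding ecbc_consecutive_def by (rule conjI[OF subS P])
  then show ?thesis by (rule conjI[OF _ ts])
qed

theorem mainTheorem3: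
  fixes n m k t r :: nat
  assumes "n \<ge> 1" "m \<ge> 1" "k \<ge> 1" "t \<ge> 1" "n \<ge> k"
    and "m \<ge> nat \<lceil>real k / real t\<rceil> + r"
  shows "(\<exists>S. ecbc_consecutive n m k t r S) \<and>
         (LEAST s. \<exists>S. ecbc_consecutive n m k t r S \<and> total_storage m S = s) = (r + 1) * n"
proof -
  have kb: "k \<le> t * nat \<lceil>real k / real t\<rceil>" using ceil_bound assms(4) by blast
  have q1: "nat \<lceil>real k / real t\<rceil> \<ge> 1"
  proof (rule ccontr)
    assume "\<not> nat \<lceil>real k / real t\<rceil> \<ge> 1"
    then have "nat \<lceil>real k / real t\<rceil> = 0" by linarith
    then have "k \<le> 0" using kb by (simp only: mult_0_right)
    then show False using assms(3) by linarith
  qed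
  have m1: "m \<ge> r + 1" using q1 assms(6) by linarith
  have k2: "k \<le> (m - r) * t"
  proof -
    have "nat \<lceil>real k / real t\<rceil> \<le> m - r" using assms(6) by (rule add_le_imp_le_diff)
    then have "t * nat \<lceil>real k / real t\<rceil> \<le> t * (m - r)" by (rule mult_le_mono2)
    from le_trans[OF kb this] show ?thesis by (simp only: mult.commute)
  qed
  obtain S where S: "ecbc_consecutive n m k t r S" "total_storage m S = (r + 1) * n"
    using upper[OF assms(4) m1 k2] by blast
  have "(LEAST s. \<exists>S. ecbc_consecutive n m k t r S \<and> total_storage m S = s) = (r + 1) * n"
  proof (rule Least_equality)
    show "\<exists>S. ecbc_consecutive n m k t r S \<and> total_storage m S = (r + 1) * n" using S by blast
    fix y assume "\<exists>S. ecbc_consecutive n m k t r S \<and> total_storage m S = y"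
    then show "(r + 1) * n \<le> y" using lower assms(3) by blast
  qed
  then show ?thesis using S by blast
qed

end
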